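(* Assume $g$ satisfies (Hg) and let $a\in(0,1)$, $k>0$. Then there exists $d_0=d_0(a,k)>0$ such that for every $0<d\le d_0$ and every sequence $(s_i)_{i\in\mathbb Z}\subset\{0,1\}$ there is at least one function $\Phi:\mathbb R\to\mathbb R$ satisfying $$0=d\big(k\Phi(\xi+1)-(k+1)\Phi(\xi)+\Phi(\xi-1)\big)+g(\Phi(\xi);a)\quad\text{for all }\xi\in\mathbb R$$ (i.e. a solution of the traveling wave equation with $c=0$) such that for every $i\in\mathbb Z$: $\Phi(i)\in[0,a)$ if $s_i=0$, and $\Phi(i)\in(a,1]$ if $s_i=1$.
   Context: A function $g:\mathbb R\times[0,1]\to\mathbb R$, $(u,a)\mapsto g(u;a)$, satisfies (Hg) if it is $C^1$ and for every $a\in(0,1)$: $g(0;a)=g(a;a)=g(1;a)=0$, $g'(0;a)<0$, $g'(1;a)<0$, $g'(a;a)>0$ (where $g'=\partial_u g$), $g(v;a)>0$ for $v\in(-\infty,0)\cup(a,1)$ and $g(v;a)<0$ for $v\in(0,a)\cup(1,\infty)$. *)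

theory Defs
  imports "HOL-Analysis.Analysis"
begin

definition C1_on_strip :: "(real \<Rightarrow> real \<Rightarrow> real) \<Rightarrow> bool" where
  "C1_on_strip g \<longleftrightarrow>
     (\<exists>D :: real \<times> real \<Rightarrow> (real \<times> real) \<Rightarrow>\<^sub>L real.
        (\<forall>x \<in> UNIV \<times> {0..1}. ((\<lambda>(u, a). g u a) has_derivative blinfun_apply (D x))
                                  (at x within UNIV \<times> {0..1}))
        \<and> continuous_on (UNIV \<times> {0..1}) D)"

definition Hg :: "(real \<Rightarrow> real \<Rightarrow> real) \<Rightarrow> bool" where
  "Hg g \<longleftrightarrow> C1_on_strip g \<and>
     (\<forall>a. 0 < a \<and> a < 1 \<longrightarrow>
        g 0 a = 0 \<and> g a a = 0 \<and> g 1 a = 0 \<and>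
        deriv (\<lambda>u. g u a) 0 < 0 \<and> deriv (\<lambda>u. g u a) 1 < 0 \<and> deriv (\<lambda>u. g u a) a > 0 \<and>
        (\<forall>v. (v < 0 \<or> (a < v \<and> v < 1)) \<longrightarrow> g v a > 0) \<and>
        (\<forall>v. ((0 < v \<and> v < a) \<or> 1 < v) \<longrightarrow> g v a < 0))"

end

theory Submission
  imports Defs
begin

lemma Hg_cont:
  assumes "Hg g" and that: "0 \<le> a'" "a' \<le> 1" shows "continuous_on UNIV (\<lambda>u. g u a')"
proof -
  from assms obtain D :: "real \<times> real \<Rightarrow> (real \<times> real) \<Rightarrow>\<^sub>L real" where
    D: "\<forall>x \<in> UNIV \<times> {0..1}. ((\<lambda>(u, a). g u a) has_derivative blinfun_apply (D x))
                                  (at x within UNIV \<times> {0..1})"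
    unfolding Hg_def C1_on_strip_def by blast
  have c: "continuous_on (UNIV \<times> {0..1}) (\<lambda>(u, a). g u a)"
    unfolding continuous_on_eq_continuous_within using D has_derivative_continuous by blast
  have "continuous_on UNIV (\<lambda>u. (\<lambda>(u, a). g u a) (u, a'))"
    by (rule continuous_on_compose2[OF c]) (auto intro!: continuous_intros simp: that)
  then show ?thesis by simp
qed

lemma sup_root:
  fixes f :: "real \<Rightarrow> real"
  assumes cont: "continuous_on UNIV f" and LR: "L \<le> R" and fL: "f L \<ge> 0" and fR: "f R \<le> 0"
  defines "c \<equiv> Sup {x \<in> {L..R}. f x \<ge> 0}"
  shows "L \<le> c \<and> c \<le> R \<and> f c = 0"
proof -
  let ?S = "{x \<in> {L..R}. f x \<ge> 0}"
  have eq: "?S = {L..R} \<inter> f -` {0..}" by auto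
  have cl: "closed ?S" unfolding eq
    by (rule continuous_closed_preimage) (auto intro: continuous_on_subset[OF cont])
  have ne: "?S \<noteq> {}" using LR fL by auto
  have bd: "bdd_above ?S" by (rule bdd_aboveI[of _ R]) auto
  have cS: "c \<in> ?S" unfolding c_def using closed_contains_Sup[OF ne bd cl] .
  have ub: "x \<le> c" if "x \<in> ?S" for x unfolding c_def using cSup_upper[OF that bd] .
  have "f c = 0"
  proof (rule ccontr)
    assume "f c \<noteq> 0"
    with cS have pos: "f c > 0" by auto
    with fR cS have "c < R" by (cases "c = R") auto
    obtain y where y: "y \<ge> c" "y \<le> R" "f y = 0"
      using IVT2'[of f R 0 c] fR pos \<open>c < R\<close> continuous_on_subset[OF cont] by force
    then have "y \<in> ?S" using cS by auto
    then have "y \<le> c" by (rule ub)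
    with y pos show False by auto
  qed
  with cS show ?thesis by auto
qed

theorem proposition2p4:
  fixes g :: "real \<Rightarrow> real \<Rightarrow> real" and a k :: real
  assumes "Hg g" and "0 < a" and "a < 1" and "k > 0"
  shows "\<exists>d0 > 0. \<forall>d. 0 < d \<and> d \<le> d0 \<longrightarrow>
           (\<forall>s :: int \<Rightarrow> nat. (\<forall>i. s i \<in> {0, 1}) \<longrightarrow>
              (\<exists>\<Phi> :: real \<Rightarrow> real.
                 (\<forall>\<xi>. 0 = d * (k * \<Phi> (\<xi> + 1) - (k + 1) * \<Phi> \<xi> + \<Phi> (\<xi> - 1)) + g (\<Phi> \<xi>) a) \<and>
                 (\<forall>i. (s i = 0 \<longrightarrow> \<Phi> (of_int i) \<in> {0..<a}) \<and>
                      (s i = 1 \<longrightarrow> \<Phi> (of_int i) \<in> {a<..1}))))"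
proof -
  define b0 where "b0 = a / 2"
  define b1 where "b1 = (1 + a) / 2"
  have hg: "\<forall>v. ((0 < v \<and> v < a) \<or> 1 < v) \<longrightarrow> g v a < 0"
           "\<forall>v. (v < 0 \<or> (a < v \<and> v < 1)) \<longrightarrow> g v a > 0"
    using assms unfolding Hg_def by auto
  have gz: "g 0 a = 0" using assms unfolding Hg_def by auto
  have g0: "g b0 a < 0" using hg(1) assms unfolding b0_def by auto
  have g1: "g b1 a > 0" using hg(2) assms unfolding b1_def by auto
  have cont: "continuous_on UNIV (\<lambda>u. g u a)" using Hg_cont[OF assms(1)] assms by auto
  define d0 where "d0 = min (- g b0 a) (g b1 a) / (2 * (k + 1))"
  have d0pos: "d0 > 0" using g0 g1 assms unfolding d0_def by auto
  have "\<forall>d. 0 < d \<and> d \<le> d0 \<longrightarrow>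
           (\<forall>s :: int \<Rightarrow> nat. (\<forall>i. s i \<in> {0, 1}) \<longrightarrow>
              (\<exists>\<Phi> :: real \<Rightarrow> real.
                 (\<forall>\<xi>. 0 = d * (k * \<Phi> (\<xi> + 1) - (k + 1) * \<Phi> \<xi> + \<Phi> (\<xi> - 1)) + g (\<Phi> \<xi>) a) \<and>
                 (\<forall>i. (s i = 0 \<longrightarrow> \<Phi> (of_int i) \<in> {0..<a}) \<and>
                      (s i = 1 \<longrightarrow> \<Phi> (of_int i) \<in> {a<..1}))))"
  proof (intro allI impI)
    fix d :: real and s :: "int \<Rightarrow> nat"
    assume d: "0 < d \<and> d \<le> d0" and s: "\<forall>i. s i \<in> {0, 1}"
    have dk0: "d * (k + 1) < - g b0 a" and dk1: "d * (k + 1) < g b1 a"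
    proof -
      have "d * (k + 1) \<le> d0 * (k + 1)" using d assms by (intro mult_right_mono) auto
      also have "d0 * (k + 1) = min (- g b0 a) (g b1 a) / 2" unfolding d0_def using assms by (simp add: field_simps)
      finally have "d * (k + 1) \<le> min (- g b0 a) (g b1 a) / 2" .
      then show "d * (k + 1) < - g b0 a" "d * (k + 1) < g b1 a" using g0 g1 by auto
    qed
    define L where "L n = (if s n = 0 then 0 else b1)" for n
    define R where "R n = (if s n = 0 then b0 else 1)" for n
    define H where "H w x = g x a + d * (w - (k + 1) * x)" for w x
    define W where "W u n = k * u (n + 1) + u (n - 1)" for u :: "int \<Rightarrow> real" and n
    define T where "T u n = Sup {x \<in> {L n..R n}. H (W u n) x \<ge> 0}" for u n
    define B where "B = {u. \<forall>n. L n \<le> u n \<and> u n \<le> R n}"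
    have LR01: "0 \<le> L n" "L n \<le> R n" "R n \<le> 1" for n
      using assms unfolding L_def R_def b0_def b1_def by auto
    have Hcont: "continuous_on UNIV (H w)" for w
      unfolding H_def by (intro continuous_intros cont[unfolded continuous_on_def, rule_format, simplified]
           continuous_on_add) (auto intro: cont continuous_intros)
    have Wb: "0 \<le> W u n \<and> W u n \<le> k + 1" if "u \<in> B" for u n
    proof -
      have "0 \<le> u (n+1)" "u (n+1) \<le> 1" "0 \<le> u (n-1)" "u (n-1) \<le> 1"
        using that LR01 unfolding B_def by (smt (verit) mem_Collect_eq)+
      then show ?thesis unfolding W_def using assms
        by (auto intro: add_mono mult_left_mono add_nonneg_nonneg mult_nonneg_nonneg)
    qed
    have HL: "H w (L n) \<ge> 0" if "0 \<le> w" "w \<le> k + 1" for w n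
    proof (cases "s n = 0")
      case True then show ?thesis using that d gz unfolding H_def L_def by auto
    next
      case False
      have "d * (w - (k + 1) * b1) \<ge> - d * (k + 1)"
      proof -
        have "(k + 1) * b1 \<le> (k + 1) * 1" using assms unfolding b1_def by (intro mult_left_mono) auto
        then have "w - (k + 1) * b1 \<ge> - (k + 1)" using that by auto
        then show ?thesis using d by (metis mult_left_mono less_imp_le mult_minus_right mult_minus_left)
      qed
      then show ?thesis using False dk1 unfolding H_def L_def by auto
    qed
    have HR: "H w (R n) \<le> 0" if "0 \<le> w" "w \<le> k + 1" for w n
    proof (cases "s n = 0")
      case True
      have "d * (w - (k + 1) * b0) \<le> d * (k + 1)"
      proof -
        have "0 \<le> (k + 1) * b0" using assms unfolding b0_def by auto
        then have "w - (k + 1) * b0 \<le> k + 1" using that by auto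
        then show ?thesis using d by (intro mult_left_mono) auto
      qed
      then show ?thesis using True dk0 unfolding H_def R_def by auto
    next
      case False
      have "g 1 a = 0" using assms unfolding Hg_def by auto
      moreover have "d * (w - (k + 1)) \<le> 0" using d that by (intro mult_nonneg_nonpos) auto
      ultimately show ?thesis using False unfolding H_def R_def by auto
    qed
    have Troot: "L n \<le> T u n \<and> T u n \<le> R n \<and> H (W u n) (T u n) = 0" if "u \<in> B" for u n
      unfolding T_def using sup_root[OF Hcont LR01(2) HL HR] Wb[OF that] by auto
    have Tmono: "T u n \<le> T v n" if "u \<in> B" "v \<in> B" "\<And>m. u m \<le> v m" for u v n
    proof -
      have "W u n \<le> W v n" unfolding W_def using that(3) assms
        by (intro add_mono mult_left_mono) auto
      then have sub: "{x \<in> {L n..R n}. H (W u n) x \<ge> 0} \<subseteq> {x \<in> {L n..R n}. H (W v n) x \<ge> 0}"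
        unfolding H_def using d by (auto intro: order_trans[OF _ add_left_mono[OF mult_left_mono]])
      have ne: "{x \<in> {L n..R n}. H (W u n) x \<ge> 0} \<noteq> {}"
        using HL[of "W u n" n] Wb[OF that(1)] LR01(2)[of n] by auto
      have bd: "bdd_above {x \<in> {L n..R n}. H (W v n) x \<ge> 0}" by (rule bdd_aboveI[of _ "R n"]) auto
      show ?thesis unfolding T_def by (rule cSup_subset_mono[OF ne bd sub])
    qed
    define S where "S = {u \<in> B. \<forall>n. u n \<le> T u n}"
    define U where "U n = Sup ((\<lambda>u. u n) ` S)" for n
    have LB: "L \<in> B" unfolding B_def using LR01 by auto
    have LS: "L \<in> S"
    proof -
      have "L n \<le> T L n" for n using Troot[OF LB, of n] by auto
      then show ?thesis unfolding S_def using LB by auto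
    qed
    have bdS: "bdd_above ((\<lambda>u. u n) ` S)" for n
      by (rule bdd_aboveI[of _ "R n"]) (auto simp: S_def B_def)
    have neS: "(\<lambda>u. u n) ` S \<noteq> {}" for n using LS by auto
    have uU: "u n \<le> U n" if "u \<in> S" for u n unfolding U_def using bdS that by (intro cSup_upper) auto
    have UB: "U \<in> B"
    proof -
      have "L n \<le> U n" for n using uU[OF LS] .
      moreover have "U n \<le> R n" for n unfolding U_def using neS
        by (intro cSup_least) (auto simp: S_def B_def)
      ultimately show ?thesis unfolding B_def by auto
    qed
    have UT0: "x \<le> T U n" if "x \<in> (\<lambda>u. u n) ` S" for x n
    proof -
      from that
      obtain u where u: "u \<in> S" "x = u n" by auto
      have "u n \<le> T u n" using u unfolding S_def by auto
      also have "\<dots> \<le> T U n" using Tmono[of u U n] u(1) UB uU[OF u(1)] unfolding S_def by auto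
      finally show "x \<le> T U n" using u by simp
    qed
    have UT: "U n \<le> T U n" for n
      by (subst U_def[of n]) (rule cSup_least[OF neS], rule UT0)
    have TUB: "T U \<in> B" unfolding B_def using Troot[OF UB] by auto
    have "T U \<in> S" unfolding S_def using TUB Tmono[OF UB TUB UT] by auto
    then have "T U n \<le> U n" for n using uU by auto
    with UT have fixU: "T U n = U n" for n by (meson order_antisym)
    have eqn: "H (W U n) (U n) = 0" for n using Troot[OF UB, of n] fixU[of n] by auto
    define \<Phi> :: "real \<Rightarrow> real" where "\<Phi> \<xi> = U (floor \<xi>)" for \<xi>
    show "\<exists>\<Phi> :: real \<Rightarrow> real.
                 (\<forall>\<xi>. 0 = d * (k * \<Phi> (\<xi> + 1) - (k + 1) * \<Phi> \<xi> + \<Phi> (\<xi> - 1)) + g (\<Phi> \<xi>) a) \<and>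
                 (\<forall>i. (s i = 0 \<longrightarrow> \<Phi> (of_int i) \<in> {0..<a}) \<and>
                      (s i = 1 \<longrightarrow> \<Phi> (of_int i) \<in> {a<..1}))"
    proof (rule exI[where x=\<Phi>], intro conjI allI impI)
      fix \<xi> :: real
      have f1: "floor (\<xi> + 1) = floor \<xi> + 1" "floor (\<xi> - 1) = floor \<xi> - 1" by linarith+
      show "0 = d * (k * \<Phi> (\<xi> + 1) - (k + 1) * \<Phi> \<xi> + \<Phi> (\<xi> - 1)) + g (\<Phi> \<xi>) a"
        using eqn[of "floor \<xi>"] unfolding \<Phi>_def f1 H_def W_def by (simp add: algebra_simps)
    next
      fix i :: int assume "s i = 0"
      then show "\<Phi> (of_int i) \<in> {0..<a}" using UB assms unfolding \<Phi>_def B_def L_def R_def b0_def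
        by (auto dest: spec[of _ i])
    next
      fix i :: int assume "s i = 1"
      then show "\<Phi> (of_int i) \<in> {a<..1}" using UB assms unfolding \<Phi>_def B_def L_def R_def b1_def
        by (auto dest: spec[of _ i])
    qed
  qed
  with d0pos show ?thesis by blast
qed

end
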